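(* Let $n\ge1$, $\lambda>0$, $1=x_0<x_1<\dots<x_m$, $\lambda_j=x_j\lambda$, $\gamma_j=\prod_{l\ne j}\frac{-x_l}{x_j-x_l}$, $\Lambda=\sum_j|\gamma_j|$. For each $\theta$ let $R_M(\theta)=\sum_{j=0}^m\gamma_jR_{\lambda_j}(\theta)$, where $R_{\lambda_j}(\theta)\in[-1,1]$ is the sensor response (expectation of an observable $O$ with $\|O\|_\infty\le1$) at noise level $\lambda_j$, and assume $R_M$ is a trigonometric polynomial of degree $n$. Let $\theta_k$, $k=1,\dots,2n+1$, be equally spaced nodes in $[0,2\pi)$ with spacing $2\pi/(2n+1)$, and at each node let $\overline{R}_M(\theta_k,N_k)=\sum_j\gamma_j\overline{R}_{\lambda_j}(\theta_k,N_j)$ with $N_j=N_k|\gamma_j|/\Lambda$ independent shots at noise level $\lambda_j$ ($\overline{R}_{\lambda_j}$ the empirical mean of single-shot outcomes). Let $\tilde{R}_M(\theta,N_I)$ be the unique trigonometric polynomial of degree $n$ interpolating the points $(\theta_k,\overline{R}_M(\theta_k,N_k))$, $N_I=\sum_kN_k$. Then, to ensure with a (constant) high probability that $|R_M(\theta)-\tilde{R}_M(\theta,N_I)|\le\delta$ for all $\theta$, it suffices that the number of shots per node satisfies $N_k\in\Omega\!\Big(\frac{\Lambda^3\log^3(n)}{\max_j|\gamma_j|\,\delta^2}\Big)$.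
   Context: A trigonometric polynomial of degree $n$ is a function $\theta\mapsto c+\sum_{s=1}^n[a_s\cos(s\theta)+b_s\sin(s\theta)]$. Single-shot outcomes are eigenvalues of $O$, lying in $[-1,1]$; all shots are independent. *)

theory Defs
  imports "HOL-Probability.Probability"
begin

definition trig_poly :: "nat \<Rightarrow> (real \<Rightarrow> real) \<Rightarrow> bool" where
  "trig_poly n f \<longleftrightarrow> (\<exists>c a b. \<forall>\<theta>.
      f \<theta> = c + (\<Sum>s=1..n. a s * cos (real s * \<theta>) + b s * sin (real s * \<theta>)))"

definition gam :: "(nat \<Rightarrow> real) \<Rightarrow> nat \<Rightarrow> nat \<Rightarrow> real" where
  "gam x m j = (\<Prod>l\<in>{0..m}-{j}. - x l / (x j - x l))"

definition Lam :: "(nat \<Rightarrow> real) \<Rightarrow> nat \<Rightarrow> real" where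
  "Lam x m = (\<Sum>j\<le>m. \<bar>gam x m j\<bar>)"

definition max_gam :: "(nat \<Rightarrow> real) \<Rightarrow> nat \<Rightarrow> real" where
  "max_gam x m = Max ((\<lambda>j. \<bar>gam x m j\<bar>) ` {0..m})"

text \<open>Sensor response at noise level l and angle theta: expectation of the single-shot
  outcome distribution D l theta.\<close>
definition resp :: "(real \<Rightarrow> real \<Rightarrow> real measure) \<Rightarrow> real \<Rightarrow> real \<Rightarrow> real" where
  "resp D l \<theta> = (\<integral>y. y \<partial>(D l \<theta>))"

definition RM :: "(real \<Rightarrow> real \<Rightarrow> real measure) \<Rightarrow> (nat \<Rightarrow> real) \<Rightarrow> real \<Rightarrow> nat \<Rightarrow> real \<Rightarrow> real" where
  "RM D x lam m \<theta> = (\<Sum>j\<le>m. gam x m j * resp D (x j * lam) \<theta>)"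

text \<open>Nodes theta_k, k = 0..2n (0-based), spacing 2pi/(2n+1).\<close>
definition node :: "nat \<Rightarrow> nat \<Rightarrow> real" where
  "node n k = 2 * pi * real k / real (2 * n + 1)"

definition shots :: "(nat \<Rightarrow> real) \<Rightarrow> nat \<Rightarrow> nat \<Rightarrow> nat \<Rightarrow> nat" where
  "shots x m Nk j = nat \<lceil>real Nk * \<bar>gam x m j\<bar> / Lam x m\<rceil>"

text \<open>Index set of all independent single shots: (node k, level j, shot s).\<close>
definition idx :: "nat \<Rightarrow> nat \<Rightarrow> (nat \<Rightarrow> real) \<Rightarrow> (nat \<Rightarrow> nat) \<Rightarrow> (nat \<times> nat \<times> nat) set" where
  "idx n m x N = {(k, j, s). k < 2 * n + 1 \<and> j \<le> m \<and> s < shots x m (N k) j}"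

definition sample_space :: "nat \<Rightarrow> nat \<Rightarrow> (nat \<Rightarrow> real) \<Rightarrow> real \<Rightarrow> (real \<Rightarrow> real \<Rightarrow> real measure)
    \<Rightarrow> (nat \<Rightarrow> nat) \<Rightarrow> (nat \<times> nat \<times> nat \<Rightarrow> real) measure" where
  "sample_space n m x lam D N =
     (\<Pi>\<^sub>M i\<in>idx n m x N. (case i of (k, j, s) \<Rightarrow> D (x j * lam) (node n k)))"

definition est :: "(nat \<Rightarrow> real) \<Rightarrow> nat \<Rightarrow> (nat \<Rightarrow> nat) \<Rightarrow> (nat \<times> nat \<times> nat \<Rightarrow> real) \<Rightarrow> nat \<Rightarrow> real" where
  "est x m N \<omega> k = (\<Sum>j\<le>m. gam x m j *
       ((\<Sum>s<shots x m (N k) j. \<omega> (k, j, s)) / real (shots x m (N k) j)))"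

definition interp :: "nat \<Rightarrow> (nat \<Rightarrow> real) \<Rightarrow> real \<Rightarrow> real" where
  "interp n ys = (THE p. trig_poly n p \<and> (\<forall>k<2 * n + 1. p (node n k) = ys k))"

end

theory Submission
  imports Defs "HOL-Analysis.Harmonic_Numbers"
begin

lemma node_sum_cis:
  fixes q :: int and a :: real
  shows "(\<Sum>k<2*n+1. cis (a + of_int q * node n k)) =
         (if int (2*n+1) dvd q then of_nat (2*n+1) * cis a else 0)"
proof -
  define M where "M = 2*n+1"
  have Mpos: "real M > 0" by (simp add: M_def)
  define z where "z = cis (2 * pi * of_int q / real M)"
  have eq: "cis (a + of_int q * node n k) = cis a * z ^ k" for k
  proof -
    have "cis a * z ^ k = cis (a + real k * (2 * pi * of_int q / real M))"
      unfolding z_def Complex.DeMoivre cis_mult by simp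
    also have "a + real k * (2 * pi * of_int q / real M) = a + of_int q * node n k"
      by (simp add: node_def M_def)
    finally show ?thesis by simp
  qed
  have S: "(\<Sum>k<M. cis (a + of_int q * node n k)) = cis a * (\<Sum>k<M. z ^ k)"
    by (simp add: eq sum_distrib_left)
  show ?thesis
  proof (cases "int M dvd q")
    case True
    then obtain l where l: "q = int M * l" by (auto elim: dvdE)
    have "2 * pi * of_int q / real M = 2 * pi * of_int l" unfolding l using Mpos by simp
    then have "z = cis (2 * pi * of_int l)" unfolding z_def by simp
    also have "\<dots> = 1" by (rule cis_multiple_2pi) simp
    finally have "z = 1" .
    then show ?thesis using S True by (simp add: M_def)
  next
    case False
    have zM: "z ^ M = 1"
    proof -
      have "z ^ M = cis (2 * pi * of_int q)" unfolding z_def Complex.DeMoivre using Mpos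
        by simp
      also have "\<dots> = 1" by (rule cis_multiple_2pi) simp
      finally show ?thesis .
    qed
    have "z \<noteq> 1"
    proof
      assume "z = 1"
      then have "cos (2 * pi * of_int q / real M) = 1" unfolding z_def
        by (metis cis.sel(1) one_complex.sel(1))
      then obtain l :: int where "2 * pi * of_int q / real M = of_int l * 2 * pi"
        by (auto simp: cos_one_2pi_int)
      then have "of_int q = real M * of_int l" using Mpos by (simp add: field_simps)
      then have "q = int M * l" by (metis of_int_eq_iff of_int_mult of_int_of_nat_eq)
      with False show False by simp
    qed
    then have "(\<Sum>k<M. z ^ k) = 0" by (simp add: geometric_sum zM)
    then show ?thesis using S False by (simp add: M_def)
  qed
qed

lemma node_sum_cos:
  "(\<Sum>k<2*n+1. cos (a + of_int q * node n k)) =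
     (if int (2*n+1) dvd q then real (2*n+1) * cos a else 0)"
  using arg_cong[where f=Re, OF node_sum_cis[of a q n]] by (simp split: if_splits)

lemma node_sum_sin:
  "(\<Sum>k<2*n+1. sin (a + of_int q * node n k)) =
     (if int (2*n+1) dvd q then real (2*n+1) * sin a else 0)"
  using arg_cong[where f=Im, OF node_sum_cis[of a q n]] by (simp split: if_splits)

lemma not_dvd_small:
  assumes "q \<noteq> 0" "\<bar>q\<bar> < int (2*n+1)" shows "\<not> int (2*n+1) dvd q"
proof
  assume "int (2*n+1) dvd q"
  then have "\<bar>int (2*n+1)\<bar> \<le> \<bar>q\<bar>" using dvd_imp_le_int assms(1) by blast
  then show False using assms(2) by linarith
qed

definition Dk :: "nat \<Rightarrow> real \<Rightarrow> real" where
  "Dk n t = 1 + 2 * (\<Sum>r=1..n. cos (real r * t))"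

definition lag :: "nat \<Rightarrow> nat \<Rightarrow> real \<Rightarrow> real" where
  "lag n k \<theta> = Dk n (\<theta> - node n k) / real (2*n+1)"

lemma node_sum_cos0:
  assumes "q \<noteq> 0" "\<bar>q\<bar> < int (2*n+1)"
  shows "(\<Sum>k<2*n+1. cos (a + of_int q * node n k)) = 0"
  using node_sum_cos[where n=n and a=a and q=q] not_dvd_small[OF assms] by simp

lemma node_sum_sin0:
  assumes "q \<noteq> 0" "\<bar>q\<bar> < int (2*n+1)"
  shows "(\<Sum>k<2*n+1. sin (a + of_int q * node n k)) = 0"
  using node_sum_sin[where n=n and a=a and q=q] not_dvd_small[OF assms] by simp

lemma repro_const: "(\<Sum>k<2*n+1. lag n k \<theta>) = 1"
proof -
  have inner: "(\<Sum>k<2*n+1. cos (real r * (\<theta> - node n k))) = 0" if r: "r \<in> {1..n}" for r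
  proof -
    have "(\<Sum>k<2*n+1. cos (real r * (\<theta> - node n k))) =
          (\<Sum>k<2*n+1. cos (real r * \<theta> + of_int (- int r) * node n k))"
      by (simp add: algebra_simps)
    also have "\<dots> = 0" using r by (intro node_sum_cos0) auto
    finally show ?thesis .
  qed
  have "(\<Sum>k<2*n+1. Dk n (\<theta> - node n k)) =
        real (2*n+1) + 2 * (\<Sum>r=1..n. \<Sum>k<2*n+1. cos (real r * (\<theta> - node n k)))"
  proof -
    have "(\<Sum>k<2*n+1. Dk n (\<theta> - node n k)) =
        (\<Sum>k<2*n+1. 1) + 2 * (\<Sum>k<2*n+1. \<Sum>r=1..n. cos (real r * (\<theta> - node n k)))"
      unfolding Dk_def by (simp add: sum.distrib sum_distrib_left)
    also have "(\<Sum>k<2*n+1. \<Sum>r=1..n. cos (real r * (\<theta> - node n k))) =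
        (\<Sum>r=1..n. \<Sum>k<2*n+1. cos (real r * (\<theta> - node n k)))"
      by (rule sum.swap)
    finally show ?thesis by simp
  qed
  also have "\<dots> = real (2*n+1)" using inner by simp
  finally show ?thesis unfolding lag_def by (simp add: sum_divide_distrib[symmetric])
qed


lemma Dk_expand:
  "(\<Sum>k<2*n+1. f k * Dk n (\<theta> - node n k)) =
   (\<Sum>k<2*n+1. f k) + 2 * (\<Sum>r=1..n. \<Sum>k<2*n+1. f k * cos (real r * (\<theta> - node n k)))"
proof -
  have "(\<Sum>k<2*n+1. f k * Dk n (\<theta> - node n k)) =
        (\<Sum>k<2*n+1. f k) + 2 * (\<Sum>k<2*n+1. \<Sum>r=1..n. f k * cos (real r * (\<theta> - node n k)))"
    unfolding Dk_def by (simp add: sum.distrib sum_distrib_left algebra_simps)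
  also have "(\<Sum>k<2*n+1. \<Sum>r=1..n. f k * cos (real r * (\<theta> - node n k))) =
        (\<Sum>r=1..n. \<Sum>k<2*n+1. f k * cos (real r * (\<theta> - node n k)))"
    by (rule sum.swap)
  finally show ?thesis .
qed

lemma repro_cos:
  assumes s: "s \<in> {1..n}"
  shows "(\<Sum>k<2*n+1. cos (real s * node n k) * lag n k \<theta>) = cos (real s * \<theta>)"
proof -
  have prod: "cos (real s * node n k) * cos (real r * (\<theta> - node n k)) =
     (cos (- (real r * \<theta>) + of_int (int s + int r) * node n k) +
      cos (real r * \<theta> + of_int (int s - int r) * node n k)) / 2" for r k
    unfolding cos_times_cos by (simp add: algebra_simps)
  have c0: "(\<Sum>k<2*n+1. cos (real s * node n k)) = 0"
    using node_sum_cos0[where n=n and a=0 and q="int s"] s by simp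
  have c1: "(\<Sum>k<2*n+1. cos (- (real r * \<theta>) + of_int (int s + int r) * node n k)) = 0"
    if r: "r \<in> {1..n}" for r
    using node_sum_cos0[where n=n and a="- (real r * \<theta>)" and q="int s + int r"] s r by simp
  have c2: "(\<Sum>k<2*n+1. cos (real r * \<theta> + of_int (int s - int r) * node n k)) =
            (if r = s then real (2*n+1) * cos (real r * \<theta>) else 0)"
    if r: "r \<in> {1..n}" for r
  proof (cases "r = s")
    case True then show ?thesis by (simp add: node_sum_cos[where q=0, simplified])
  next
    case False
    have "(\<Sum>k<2*n+1. cos (real r * \<theta> + of_int (int s - int r) * node n k)) = 0"
      by (rule node_sum_cos0) (use s r False in auto)
    then show ?thesis using False by simp
  qed
  have "(\<Sum>k<2*n+1. cos (real s * node n k) * Dk n (\<theta> - node n k)) =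
        0 + 2 * (\<Sum>r=1..n. (\<Sum>k<2*n+1. cos (- (real r * \<theta>) + of_int (int s + int r) * node n k)) / 2 +
                  (\<Sum>k<2*n+1. cos (real r * \<theta> + of_int (int s - int r) * node n k)) / 2)"
    unfolding Dk_expand c0 prod by (simp add: sum.distrib add_divide_distrib sum_divide_distrib)
  also have "\<dots> = 2 * (\<Sum>r=1..n. (if r = s then real (2*n+1) * cos (real r * \<theta>) else 0) / 2)"
    using c1 c2 by simp
  also have "\<dots> = real (2*n+1) * cos (real s * \<theta>)"
    using s by (simp add: sum_divide_distrib[symmetric])
  finally show ?thesis unfolding lag_def
    by (simp add: sum_divide_distrib[symmetric] field_simps)
qed

lemma repro_sin:
  assumes s: "s \<in> {1..n}"
  shows "(\<Sum>k<2*n+1. sin (real s * node n k) * lag n k \<theta>) = sin (real s * \<theta>)"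
proof -
  have prod: "sin (real s * node n k) * cos (real r * (\<theta> - node n k)) =
     (sin (real r * \<theta> + of_int (int s - int r) * node n k) +
      sin (- (real r * \<theta>) + of_int (int s + int r) * node n k)) / 2" for r k
    unfolding sin_times_cos by (simp add: algebra_simps)
  have c0: "(\<Sum>k<2*n+1. sin (real s * node n k)) = 0"
    using node_sum_sin0[where n=n and a=0 and q="int s"] s by simp
  have c1: "(\<Sum>k<2*n+1. sin (- (real r * \<theta>) + of_int (int s + int r) * node n k)) = 0"
    if r: "r \<in> {1..n}" for r
    using node_sum_sin0[where n=n and a="- (real r * \<theta>)" and q="int s + int r"] s r by simp
  have c2: "(\<Sum>k<2*n+1. sin (real r * \<theta> + of_int (int s - int r) * node n k)) =
            (if r = s then real (2*n+1) * sin (real r * \<theta>) else 0)"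
    if r: "r \<in> {1..n}" for r
  proof (cases "r = s")
    case True then show ?thesis by (simp add: node_sum_sin[where q=0, simplified])
  next
    case False
    have "(\<Sum>k<2*n+1. sin (real r * \<theta> + of_int (int s - int r) * node n k)) = 0"
      by (rule node_sum_sin0) (use s r False in auto)
    then show ?thesis using False by simp
  qed
  have "(\<Sum>k<2*n+1. sin (real s * node n k) * Dk n (\<theta> - node n k)) =
        0 + 2 * (\<Sum>r=1..n. (\<Sum>k<2*n+1. sin (real r * \<theta> + of_int (int s - int r) * node n k)) / 2 +
                  (\<Sum>k<2*n+1. sin (- (real r * \<theta>) + of_int (int s + int r) * node n k)) / 2)"
    unfolding Dk_expand c0 prod by (simp add: sum.distrib add_divide_distrib sum_divide_distrib)
  also have "\<dots> = 2 * (\<Sum>r=1..n. (if r = s then real (2*n+1) * sin (real r * \<theta>) else 0) / 2)"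
    using c1 c2 by simp
  also have "\<dots> = real (2*n+1) * sin (real s * \<theta>)"
    using s by (simp add: sum_divide_distrib[symmetric])
  finally show ?thesis unfolding lag_def
    by (simp add: sum_divide_distrib[symmetric] field_simps)
qed


lemma repro_trig:
  assumes "trig_poly n p"
  shows "p \<theta> = (\<Sum>k<2*n+1. p (node n k) * lag n k \<theta>)"
proof -
  obtain c a b where p: "\<And>t. p t = c + (\<Sum>s=1..n. a s * cos (real s * t) + b s * sin (real s * t))"
    using assms unfolding trig_poly_def by blast
  have "(\<Sum>k<2*n+1. p (node n k) * lag n k \<theta>) =
        c * (\<Sum>k<2*n+1. lag n k \<theta>) + (\<Sum>k<2*n+1. \<Sum>s=1..n.
            a s * (cos (real s * node n k) * lag n k \<theta>) + b s * (sin (real s * node n k) * lag n k \<theta>))"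
    unfolding p by (simp add: sum.distrib sum_distrib_left sum_distrib_right algebra_simps)
  also have "(\<Sum>k<2*n+1. \<Sum>s=1..n.
            a s * (cos (real s * node n k) * lag n k \<theta>) + b s * (sin (real s * node n k) * lag n k \<theta>)) =
       (\<Sum>s=1..n. \<Sum>k<2*n+1.
            a s * (cos (real s * node n k) * lag n k \<theta>) + b s * (sin (real s * node n k) * lag n k \<theta>))"
    by (rule sum.swap)
  also have "\<dots> = (\<Sum>s=1..n. a s * cos (real s * \<theta>) + b s * sin (real s * \<theta>))"
  proof (rule sum.cong[OF refl])
    fix s assume s: "s \<in> {1..n}"
    show "(\<Sum>k<2*n+1. a s * (cos (real s * node n k) * lag n k \<theta>) + b s * (sin (real s * node n k) * lag n k \<theta>))
        = a s * cos (real s * \<theta>) + b s * sin (real s * \<theta>)"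
      using repro_cos[OF s, of \<theta>] repro_sin[OF s, of \<theta>]
      by (simp add: sum.distrib sum_distrib_left[symmetric])
  qed
  finally show ?thesis using repro_const[of n \<theta>] p by simp
qed

lemma Dk_closed: "Dk n t * sin (t / 2) = sin (real (2*n+1) * t / 2)"
proof (induction n)
  case 0
  then show ?case by (simp add: Dk_def)
next
  case (Suc n)
  have "Dk (Suc n) t = Dk n t + 2 * cos (real (Suc n) * t)"
    by (simp add: Dk_def)
  then have "Dk (Suc n) t * sin (t / 2) = sin (real (2*n+1) * t / 2) + 2 * cos (real (Suc n) * t) * sin (t / 2)"
    using Suc.IH by (simp add: algebra_simps)
  also have "2 * cos (real (Suc n) * t) * sin (t / 2) =
      sin (real (Suc n) * t + t / 2) - sin (real (Suc n) * t - t / 2)"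
    by (simp add: sin_add sin_diff)
  also have "real (Suc n) * t - t / 2 = real (2*n+1) * t / 2" by (simp add: field_simps)
  also have "real (Suc n) * t + t / 2 = real (2 * Suc n + 1) * t / 2" by (simp add: field_simps)
  finally show ?case by simp
qed

lemma lag_node:
  assumes i: "i < 2*n+1" and k: "k < 2*n+1"
  shows "lag n k (node n i) = (if i = k then 1 else 0)"
proof (cases "i = k")
  case True
  then show ?thesis by (simp add: lag_def Dk_def)
next
  case False
  define M where "M = 2*n+1"
  have Mpos: "real M > 0" by (simp add: M_def)
  define t where "t = node n i - node n k"
  have t: "t = 2 * pi * (real i - real k) / real M"
    by (simp add: t_def node_def M_def diff_divide_distrib right_diff_distrib)
  have s1: "sin (real M * t / 2) = 0"
  proof -
    have "real M * t / 2 = of_int (int i - int k) * pi" using Mpos by (simp add: t)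
    then show ?thesis unfolding sin_zero_iff_int2 by blast
  qed
  have s2: "sin (t / 2) \<noteq> 0"
  proof
    assume "sin (t / 2) = 0"
    then obtain j :: int where "t / 2 = of_int j * pi" by (auto simp: sin_zero_iff_int2)
    then have "pi * ((real i - real k) / real M) = pi * of_int j" by (simp add: t)
    then have "(real i - real k) / real M = of_int j" using pi_gt_zero
      by (metis mult_cancel_left less_irrefl times_divide_eq_right)
    then have "real i - real k = real M * of_int j" using Mpos by (simp add: field_simps)
    then have "int i - int k = int M * j" by (metis of_int_eq_iff of_int_mult of_int_of_nat_eq of_int_diff)
    then have "int M dvd (int i - int k)" by simp
    moreover have "int i - int k \<noteq> 0" "\<bar>int i - int k\<bar> < int (2*n+1)" using False i k by auto
    ultimately show False using not_dvd_small M_def by blast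
  qed
  have "Dk n t = 0" using Dk_closed[of n t] s1 s2 by (simp add: M_def)
  then show ?thesis using False by (simp add: lag_def t_def)
qed

lemma lag_trig: "trig_poly n (\<lambda>\<theta>. \<Sum>k<2*n+1. ys k * lag n k \<theta>)"
proof -
  define M where "M = real (2*n+1)"
  define c where "c = (\<Sum>k<2*n+1. ys k) / M"
  define a where "a = (\<lambda>r. 2 / M * (\<Sum>k<2*n+1. ys k * cos (real r * node n k)))"
  define b where "b = (\<lambda>r. 2 / M * (\<Sum>k<2*n+1. ys k * sin (real r * node n k)))"
  have "(\<Sum>k<2*n+1. ys k * lag n k \<theta>) =
          c + (\<Sum>s=1..n. a s * cos (real s * \<theta>) + b s * sin (real s * \<theta>))" for \<theta>
  proof -
    have "(\<Sum>k<2*n+1. ys k * lag n k \<theta>) = (\<Sum>k<2*n+1. ys k / M + (\<Sum>r=1..n.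
            2 / M * (ys k * cos (real r * node n k)) * cos (real r * \<theta>) +
            2 / M * (ys k * sin (real r * node n k)) * sin (real r * \<theta>)))"
      unfolding lag_def Dk_def M_def
      by (rule sum.cong[OF refl]) (simp add: cos_diff sum_distrib_left add_divide_distrib
           sum_divide_distrib algebra_simps sum.distrib)
    also have "\<dots> = c + (\<Sum>k<2*n+1. \<Sum>r=1..n.
            2 / M * (ys k * cos (real r * node n k)) * cos (real r * \<theta>) +
            2 / M * (ys k * sin (real r * node n k)) * sin (real r * \<theta>))"
      by (simp only: sum.distrib c_def sum_divide_distrib)
    also have "(\<Sum>k<2*n+1. \<Sum>r=1..n.
            2 / M * (ys k * cos (real r * node n k)) * cos (real r * \<theta>) +
            2 / M * (ys k * sin (real r * node n k)) * sin (real r * \<theta>)) =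
           (\<Sum>r=1..n. \<Sum>k<2*n+1.
            2 / M * (ys k * cos (real r * node n k)) * cos (real r * \<theta>) +
            2 / M * (ys k * sin (real r * node n k)) * sin (real r * \<theta>))"
      by (rule sum.swap)
    also have "\<dots> = (\<Sum>s=1..n. a s * cos (real s * \<theta>) + b s * sin (real s * \<theta>))"
      by (simp only: a_def b_def sum.distrib sum_distrib_left sum_distrib_right)
    finally show ?thesis .
  qed
  then show ?thesis unfolding trig_poly_def by blast
qed

lemma interp_eq: "interp n ys = (\<lambda>\<theta>. \<Sum>k<2*n+1. ys k * lag n k \<theta>)"
  unfolding interp_def
proof (rule the_equality)
  show "trig_poly n (\<lambda>\<theta>. \<Sum>k<2*n+1. ys k * lag n k \<theta>) \<and>
        (\<forall>k<2*n+1. (\<Sum>j<2*n+1. ys j * lag n j (node n k)) = ys k)"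
  proof (intro conjI allI impI lag_trig)
    fix k assume k: "k < 2*n+1"
    have "(\<Sum>j<2*n+1. ys j * lag n j (node n k)) = (\<Sum>j<2*n+1. if j = k then ys j else 0)"
      by (rule sum.cong[OF refl]) (use k in \<open>auto simp: lag_node\<close>)
    also have "\<dots> = ys k" using k by simp
    finally show "(\<Sum>j<2*n+1. ys j * lag n j (node n k)) = ys k" .
  qed
next
  fix p assume p: "trig_poly n p \<and> (\<forall>k<2*n+1. p (node n k) = ys k)"
  show "p = (\<lambda>\<theta>. \<Sum>k<2*n+1. ys k * lag n k \<theta>)"
  proof
    fix \<theta>
    show "p \<theta> = (\<Sum>k<2*n+1. ys k * lag n k \<theta>)"
      using repro_trig[of n p \<theta>] p by simp
  qed
qed


lemma Dk_abs_le: "\<bar>Dk n t\<bar> \<le> real (2*n+1)"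
proof -
  have "\<bar>\<Sum>r=1..n. cos (real r * t)\<bar> \<le> (\<Sum>r=1..n. \<bar>cos (real r * t)\<bar>)" by (rule sum_abs)
  also have "\<dots> \<le> (\<Sum>r=1..n. 1)" by (intro sum_mono) simp
  finally have "\<bar>\<Sum>r=1..n. cos (real r * t)\<bar> \<le> real n" by simp
  then show ?thesis unfolding Dk_def by linarith
qed

lemma Dk_periodic: "Dk n (t + 2 * pi * of_int w) = Dk n t"
proof -
  have "cos (real r * (t + 2 * pi * of_int w)) = cos (real r * t)" for r
  proof -
    have "real r * (t + 2 * pi * of_int w) = real r * t + (2 * pi) * of_int (int r * w)" by (simp add: algebra_simps)
    then show ?thesis by (simp only: cos_add cos_int_2pin sin_int_2pin)
  qed
  then show ?thesis unfolding Dk_def by simp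
qed

lemma sin_ge_third: fixes x :: real assumes "0 \<le> x" "x \<le> 2" shows "x / 3 \<le> sin x"
proof -
  have "\<bar>sin x - (\<Sum>m<3. sin_coeff m * x ^ m)\<bar> \<le> inverse (fact 3) * \<bar>x\<bar> ^ 3"
    by (rule Maclaurin_sin_bound)
  moreover have "(\<Sum>m<3. sin_coeff m * x ^ m) = x"
    by (simp add: numeral_3_eq_3 sin_coeff_def)
  ultimately have "\<bar>sin x - x\<bar> \<le> x ^ 3 / 6" using assms by (simp add: fact_numeral)
  then have "sin x \<ge> x - x ^ 3 / 6" by arith
  moreover have "x ^ 3 \<le> 4 * x"
  proof -
    have "x ^ 3 = x * x\<^sup>2" by (simp add: power_numeral_reduce power2_eq_square)
    also have "x\<^sup>2 \<le> 4" using assms by (metis power2_eq_square mult_mono order_refl numeral_times_numeral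
        semiring_norm(12) semiring_norm(13) num_double power2_nat_le_imp_le zero_le_numeral
        power_mono[of x 2 2] power2_eq_square[of 2] )
    then have "x * x\<^sup>2 \<le> x * 4" using assms by (intro mult_left_mono) auto
    finally show ?thesis by simp
  qed
  ultimately show ?thesis by simp
qed

lemma term_bound:
  assumes n: "n \<ge> 1" and b: "0 \<le> \<beta>" "\<beta> < 1" and r: "1 \<le> r" "r < 2*n"
  shows "\<bar>Dk n (2 * pi * (\<beta> + real r) / real (2*n+1))\<bar> / real (2*n+1)
          \<le> 1 / real r + 1 / real (2*n - r)"
proof -
  define M where "M = real (2*n+1)"
  have Mpos: "M > 0" by (simp add: M_def)
  define y where "y = \<beta> + real r"
  define x where "x = pi * y / M"
  have ypos: "y \<ge> real r" using b by (simp add: y_def)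
  have yM: "M - y > real (2*n - r)" using b r by (simp add: y_def M_def of_nat_diff)
  have r2: "real (2*n - r) \<ge> 1" using r by simp
  have xpos: "0 < x" using ypos r Mpos by (simp add: x_def)
  have xlt: "x < pi" using yM r2 Mpos by (simp add: x_def field_simps)
  have sinpos: "sin x > 0" using xpos xlt by (rule sin_gt_zero)
  have key: "Dk n (2 * x) * sin x = sin (M * x)"
    using Dk_closed[of n "2 * x"] by (simp add: M_def)
  have "\<bar>Dk n (2 * x)\<bar> * sin x = \<bar>sin (M * x)\<bar>"
    using key sinpos by (metis abs_mult abs_of_pos)
  then have "\<bar>Dk n (2 * x)\<bar> * sin x \<le> 1" using abs_sin_le_one by metis
  then have D1: "\<bar>Dk n (2 * x)\<bar> \<le> 1 / sin x" using sinpos by (simp add: field_simps)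
  have lb: "sin x \<ge> min (real r) (real (2*n - r)) / M"
  proof (cases "y \<le> M / 2")
    case True
    have "x \<le> pi / 2" using True Mpos by (simp add: x_def field_simps)
    then have "x \<le> 2" using pi_half_less_two by linarith
    then have "sin x \<ge> x / 3" using xpos by (intro sin_ge_third) auto
    moreover have "x / 3 \<ge> y / M" using pi_gt3 Mpos ypos r
      by (simp add: x_def field_simps)
    moreover have "y / M \<ge> real r / M" using ypos Mpos by (simp add: divide_right_mono)
    ultimately show ?thesis by (smt (verit) Mpos divide_right_mono min.cobounded1)
  next
    case False
    define x' where "x' = pi * (M - y) / M"
    have "sin x = sin x'" unfolding x'_def x_def using Mpos
      by (metis diff_divide_distrib nonzero_mult_div_cancel_right right_diff_distrib sin_pi_minus
          less_irrefl)
    have x'pos: "0 \<le> x'" using yM r2 Mpos by (simp add: x'_def)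
    have "x' \<le> pi / 2" using False Mpos by (simp add: x'_def field_simps)
    then have "x' \<le> 2" using pi_half_less_two by linarith
    then have "sin x' \<ge> x' / 3" using x'pos by (intro sin_ge_third) auto
    moreover have "x' / 3 \<ge> (M - y) / M"
    proof -
      have my: "M - y > 0" using yM r2 by linarith
      have "3 * (M - y) \<le> pi * (M - y)" using my pi_gt3 by (intro mult_right_mono) auto
      then have "3 * (M - y) / (3 * M) \<le> pi * (M - y) / (3 * M)"
        using Mpos by (intro divide_right_mono) auto
      also have "3 * (M - y) / (3 * M) = (M - y) / M" by (rule mult_divide_mult_cancel_left) simp
      also have "pi * (M - y) / (3 * M) = x' / 3" by (simp add: x'_def)
      finally show ?thesis .
    qed
    moreover have "(M - y) / M \<ge> real (2*n - r) / M" using yM Mpos by (simp add: divide_right_mono)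
    ultimately show ?thesis using \<open>sin x = sin x'\<close>
      by (smt (verit) Mpos divide_right_mono min.cobounded2)
  qed
  have mpos: "min (real r) (real (2*n - r)) > 0" using r r2 by simp
  have "\<bar>Dk n (2 * x)\<bar> / M \<le> 1 / (M * sin x)" using D1 Mpos by (simp add: field_simps)
  also have "\<dots> \<le> 1 / min (real r) (real (2*n - r))"
    using lb mpos Mpos sinpos by (simp add: field_simps) 
  also have "\<dots> \<le> 1 / real r + 1 / real (2*n - r)"
    using r r2 by (cases "real r \<le> real (2*n - r)") (auto simp: min_def)
  finally show ?thesis by (simp add: x_def y_def M_def mult.assoc)
qed


lemma harm_sum_eq: "(\<Sum>r\<in>{1..<N}. 1 / real r) = harm (N - 1)"
proof -
  have "{1..<N} = {1..N-1}" by auto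
  then show ?thesis by (simp add: harm_def divide_inverse)
qed

lemma harm_le_ln: "N \<ge> 1 \<Longrightarrow> harm N \<le> 1 + ln (real N)"
  using euler_mascheroni_sequence_decreasing[of 1 N] by (simp add: harm_def)

lemma sum_h_bound:
  fixes h :: "nat \<Rightarrow> real"
  assumes n: "n \<ge> 1"
    and h0: "h 0 \<le> 1" and h2n: "h (2*n) \<le> 1"
    and hmid: "\<And>r. 1 \<le> r \<Longrightarrow> r < 2*n \<Longrightarrow> h r \<le> 1 / real r + 1 / real (2*n - r)"
  shows "(\<Sum>r<2*n+1. h r) \<le> 2 + 2 * harm (2*n - 1)"
proof -
  have set: "{..<2*n+1} = insert 0 (insert (2*n) {1..<2*n})" using n by auto
  have "(\<Sum>r<2*n+1. h r) = h 0 + (h (2*n) + (\<Sum>r\<in>{1..<2*n}. h r))"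
    unfolding set using n by (subst sum.insert; auto)+
  also have "(\<Sum>r\<in>{1..<2*n}. h r) \<le> (\<Sum>r\<in>{1..<2*n}. 1 / real r + 1 / real (2*n - r))"
    by (intro sum_mono hmid) auto
  also have "\<dots> = (\<Sum>r\<in>{1..<2*n}. 1 / real r) + (\<Sum>r\<in>{1..<2*n}. 1 / real (2*n - r))"
    by (rule sum.distrib)
  also have "(\<Sum>r\<in>{1..<2*n}. 1 / real (2*n - r)) = (\<Sum>r\<in>{1..<2*n}. 1 / real r)"
    by (rule sum.reindex_bij_witness[of _ "\<lambda>r. 2*n - r" "\<lambda>r. 2*n - r"]) auto
  finally show ?thesis using h0 h2n harm_sum_eq[of "2*n"] by simp
qed

lemma lebesgue:
  assumes n: "n \<ge> 1"
  shows "(\<Sum>k<2*n+1. \<bar>lag n k \<theta>\<bar>) \<le> 12 * ln (real n + 1)"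
proof -
  define M where "M = 2*n+1"
  have Mpos: "real M > 0" "int M > 0" by (auto simp: M_def)
  define \<alpha> where "\<alpha> = \<theta> * real M / (2 * pi)"
  define j where "j = \<lfloor>\<alpha>\<rfloor>"
  define \<beta> where "\<beta> = \<alpha> - of_int j"
  have b: "0 \<le> \<beta>" "\<beta> < 1" unfolding \<beta>_def j_def by linarith+
  define \<rho> where "\<rho> = (\<lambda>k::nat. nat ((j - int k) mod int M))"
  define w where "w = (\<lambda>k::nat. (j - int k) div int M)"
  define h where "h = (\<lambda>r::nat. \<bar>Dk n (2 * pi * (\<beta> + real r) / real M)\<bar> / real M)"
  have rho_lt: "\<rho> k < M" for k
    unfolding \<rho>_def using Mpos by (simp add: nat_less_iff)
  have claim1: "\<bar>lag n k \<theta>\<bar> = h (\<rho> k)" for k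
  proof -
    have dm: "j - int k = (j - int k) mod int M + int M * w k"
      unfolding w_def by simp
    have r_eq: "real (\<rho> k) = of_int ((j - int k) mod int M)"
      unfolding \<rho>_def using Mpos by simp
    have "real_of_int (j - int k) = real (\<rho> k) + real M * of_int (w k)"
      using arg_cong[where f=real_of_int, OF dm] r_eq by simp
    then have e1: "of_int j - real k = real (\<rho> k) + real M * of_int (w k)" by simp
    have "\<theta> = 2 * pi * \<alpha> / real M" using Mpos by (simp add: \<alpha>_def)
    then have "\<theta> - node n k = 2 * pi * (\<beta> + (of_int j - real k)) / real M"
      by (simp add: node_def M_def \<beta>_def diff_divide_distrib right_diff_distrib algebra_simps)
    also have "\<dots> = 2 * pi * (\<beta> + real (\<rho> k)) / real M + 2 * pi * of_int (w k)"
      unfolding e1 using Mpos by (simp add: field_simps)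
    finally have "\<theta> - node n k = 2 * pi * (\<beta> + real (\<rho> k)) / real M + 2 * pi * of_int (w k)" .
    then show ?thesis unfolding lag_def h_def M_def by (simp add: Dk_periodic)
  qed
  have inj: "inj_on \<rho> {..<M}"
  proof
    fix a b assume a: "a \<in> {..<M}" and bb: "b \<in> {..<M}" and e: "\<rho> a = \<rho> b"
    have "(j - int a) mod int M = (j - int b) mod int M"
      using e unfolding \<rho>_def using Mpos
      by (metis Euclidean_Rings.pos_mod_sign nat_eq_iff2)
    then have "int M dvd ((j - int a) - (j - int b))" by (simp add: mod_eq_dvd_iff)
    then have d: "int M dvd (int b - int a)" by simp
    show "a = b"
    proof (rule ccontr)
      assume "a \<noteq> b"
      then have "int b - int a \<noteq> 0" "\<bar>int b - int a\<bar> < int (2*n+1)" using a bb by (auto simp: M_def)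
      then show False using not_dvd_small d M_def by blast
    qed
  qed
  have hnn: "h r \<ge> 0" for r unfolding h_def using Mpos by simp
  have "(\<Sum>k<M. \<bar>lag n k \<theta>\<bar>) = (\<Sum>k<M. h (\<rho> k))" using claim1 by simp
  also have "\<dots> = (\<Sum>r\<in>\<rho> ` {..<M}. h r)" using sum.reindex[OF inj, of h] by simp
  also have "\<dots> \<le> (\<Sum>r<M. h r)"
    by (rule sum_mono2) (use rho_lt hnn in auto)
  also have "\<dots> \<le> 2 + 2 * harm (2*n - 1)"
    unfolding M_def
  proof (rule sum_h_bound[OF n])
    show "h 0 \<le> 1" "h (2*n) \<le> 1" unfolding h_def M_def using Dk_abs_le by (simp_all add: divide_le_eq)
    fix r assume "1 \<le> r" "r < 2*n"
    then show "h r \<le> 1 / real r + 1 / real (2*n - r)"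
      unfolding h_def M_def using term_bound[OF n b] by blast
  qed
  also have "harm (2*n - 1) \<le> 1 + ln (real (2*n - 1))"
    using n by (intro harm_le_ln) auto
  also have "ln (real (2*n - 1)) \<le> ln 2 + ln (real n + 1)"
  proof -
    have "ln (real (2*n - 1)) \<le> ln (2 * (real n + 1))" using n by (intro ln_mono) auto
    also have "\<dots> = ln 2 + ln (real n + 1)" by (rule ln_mult_pos) auto
    finally show ?thesis .
  qed
  also have "ln 2 \<le> ln (real n + 1)" using n by (intro ln_mono) auto
  finally have "(\<Sum>k<M. \<bar>lag n k \<theta>\<bar>) \<le> 4 + 4 * ln (real n + 1)" by simp
  moreover have "2/3 \<le> ln (real n + 1)"
    using ln2_ge_two_thirds \<open>ln 2 \<le> ln (real n + 1)\<close> by linarith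
  ultimately show ?thesis unfolding M_def by linarith
qed


lemma PiM_indep_components:
  fixes Mi :: "'i \<Rightarrow> 'a measure"
  assumes fin: "finite I" and ne: "I \<noteq> {}" and ps: "\<And>i. i \<in> I \<Longrightarrow> prob_space (Mi i)"
  shows "prob_space.indep_vars (PiM I Mi) Mi (\<lambda>i \<omega>. \<omega> i) I"
proof -
  interpret P: prob_space "PiM I Mi" by (rule prob_space_PiM) (rule ps)
  show ?thesis
  proof (subst P.indep_vars_iff_distr_eq_PiM'[OF ne])
    fix i assume "i \<in> I"
    then show "(\<lambda>\<omega>. \<omega> i) \<in> measurable (PiM I Mi) (Mi i)"
      by (rule measurable_component_singleton)
  next
    have "distr (PiM I Mi) (PiM I Mi) (\<lambda>x. \<lambda>i\<in>I. x i) = distr (PiM I Mi) (PiM I Mi) (\<lambda>x. x)"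
      by (rule distr_cong) (auto simp: space_PiM PiE_def extensional_restrict)
    also have "\<dots> = PiM I Mi" by (rule distr_id)
    also have "\<dots> = PiM I (\<lambda>i. distr (PiM I Mi) (Mi i) (\<lambda>\<omega>. \<omega> i))"
      by (rule PiM_cong[OF refl]) (simp add: distr_PiM_component[where M=Mi] ps)
    finally show "distr (PiM I Mi) (PiM I Mi) (\<lambda>x. \<lambda>i\<in>I. x i) =
        PiM I (\<lambda>i. distr (PiM I Mi) (Mi i) (\<lambda>\<omega>. \<omega> i))" .
  qed
qed

lemma PiM_component_integral:
  fixes Mi :: "'i \<Rightarrow> real measure"
  assumes ps: "\<And>i. i \<in> I \<Longrightarrow> prob_space (Mi i)" and i: "i \<in> I"
    and sb: "sets (Mi i) = sets borel"
  shows "(\<integral>\<omega>. \<omega> i \<partial>PiM I Mi) = (\<integral>y. y \<partial>Mi i)"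
proof -
  have "(\<integral>y. y \<partial>Mi i) = (\<integral>y. y \<partial>distr (PiM I Mi) (Mi i) (\<lambda>\<omega>. \<omega> i))"
    by (simp only: distr_PiM_component[where M=Mi, OF ps i])
  also have "\<dots> = (\<integral>\<omega>. \<omega> i \<partial>PiM I Mi)"
  proof (rule integral_distr)
    show "(\<lambda>\<omega>. \<omega> i) \<in> measurable (PiM I Mi) (Mi i)" using i by (rule measurable_component_singleton)
    have "measurable (Mi i) borel = measurable borel borel"
      using sb by (intro measurable_cong_sets) auto
    moreover have "(\<lambda>y::real. y) \<in> measurable borel borel" by simp
    ultimately show "(\<lambda>y::real. y) \<in> measurable (Mi i) borel" by metis
  qed
  finally show ?thesis by simp
qed

lemma hoeffding_lin:
  fixes Mi :: "'i \<Rightarrow> real measure" and c :: "'i \<Rightarrow> real"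
  assumes fin: "finite I" and ps: "\<And>i. i \<in> I \<Longrightarrow> prob_space (Mi i)"
    and sb: "\<And>i. i \<in> I \<Longrightarrow> sets (Mi i) = sets borel"
    and bd: "\<And>i. i \<in> I \<Longrightarrow> AE y in Mi i. \<bar>y\<bar> \<le> 1"
    and J: "J \<subseteq> I" and eps: "\<epsilon> \<ge> 0" and pos: "(\<Sum>i\<in>J. (2 * \<bar>c i\<bar>)\<^sup>2) > 0"
  shows "measure (PiM I Mi) {\<omega> \<in> space (PiM I Mi).
            \<bar>(\<Sum>i\<in>J. c i * \<omega> i) - (\<Sum>i\<in>J. c i * (\<integral>y. y \<partial>Mi i))\<bar> \<ge> \<epsilon>}
         \<le> 2 * exp (-2 * \<epsilon>\<^sup>2 / (\<Sum>i\<in>J. (2 * \<bar>c i\<bar>)\<^sup>2))"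
proof -
  interpret P: prob_space "PiM I Mi" by (rule prob_space_PiM) (rule ps)
  have neJ: "J \<noteq> {}" using pos by auto
  then have ne: "I \<noteq> {}" using J by auto
  have ind0: "P.indep_vars Mi (\<lambda>i \<omega>. \<omega> i) I" by (rule PiM_indep_components[OF fin ne ps])
  have ind1: "P.indep_vars Mi (\<lambda>i \<omega>. \<omega> i) J" by (rule P.indep_vars_subset[OF ind0 J])
  have ind: "P.indep_vars (\<lambda>_. borel) (\<lambda>i \<omega>. c i * \<omega> i) J"
  proof (rule P.indep_vars_compose2[OF ind1])
    fix i assume "i \<in> J"
    then have "measurable (Mi i) borel = measurable borel borel"
      using J sb by (intro measurable_cong_sets) auto
    moreover have "(\<lambda>y. c i * y) \<in> measurable borel borel" by simp
    ultimately show "(\<lambda>y. c i * y) \<in> measurable (Mi i) borel" by metis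
  qed
  interpret H: Hoeffding_ineq "PiM I Mi" J "\<lambda>i \<omega>. c i * \<omega> i" "\<lambda>i. - \<bar>c i\<bar>" "\<lambda>i. \<bar>c i\<bar>"
    "\<Sum>i\<in>J. P.expectation (\<lambda>\<omega>. c i * \<omega> i)"
  proof unfold_locales
    show "finite J" using fin J finite_subset by blast
    show "P.indep_vars (\<lambda>_. borel) (\<lambda>i \<omega>. c i * \<omega> i) J" by (rule ind)
    fix i assume i: "i \<in> J"
    have "AE \<omega> in PiM I Mi. \<bar>\<omega> i\<bar> \<le> 1"
      by (rule AE_PiM_component[OF ps]) (use i J bd in auto)
    then show "AE \<omega> in PiM I Mi. c i * \<omega> i \<in> {- \<bar>c i\<bar>..\<bar>c i\<bar>}"
    proof (rule eventually_mono)
      fix \<omega> :: "'i \<Rightarrow> real" assume "\<bar>\<omega> i\<bar> \<le> 1"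
      then have "\<bar>c i * \<omega> i\<bar> \<le> \<bar>c i\<bar>"
        by (simp add: abs_mult mult_left_le)
      then show "c i * \<omega> i \<in> {- \<bar>c i\<bar>..\<bar>c i\<bar>}" by (simp add: abs_le_iff)
    qed
  qed simp
  have mu: "(\<Sum>i\<in>J. P.expectation (\<lambda>\<omega>. c i * \<omega> i)) = (\<Sum>i\<in>J. c i * (\<integral>y. y \<partial>Mi i))"
  proof (rule sum.cong[OF refl])
    fix i assume i: "i \<in> J"
    then have "i \<in> I" using J by auto
    then show "P.expectation (\<lambda>\<omega>. c i * \<omega> i) = c i * (\<integral>y. y \<partial>Mi i)"
      using PiM_component_integral[where Mi=Mi and I=I, OF ps \<open>i \<in> I\<close> sb[OF \<open>i \<in> I\<close>]] by simp
  qed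
  have "(\<Sum>i\<in>J. (\<bar>c i\<bar> - - \<bar>c i\<bar>)\<^sup>2) = (\<Sum>i\<in>J. (2 * \<bar>c i\<bar>)\<^sup>2)" by simp
  then show ?thesis using H.Hoeffding_ineq_abs_ge[OF eps] pos unfolding mu by simp
qed


lemma x_ge1:
  assumes x0: "x 0 = 1" and xinc: "\<forall>j<m. x j < x (Suc j)" and j: "j \<le> m"
  shows "x j \<ge> (1::real)"
  using j
proof (induction j)
  case 0 then show ?case using x0 by simp
next
  case (Suc j)
  then have "x j < x (Suc j)" using xinc by simp
  then show ?case using Suc by simp
qed

lemma x_strict:
  assumes xinc: "\<forall>j<m. x j < x (Suc j)" and ij: "i < j" and j: "j \<le> m"
  shows "x i < (x j :: real)"
  using ij j
proof (induction j)
  case 0 then show ?case by simp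
next
  case (Suc j)
  have step: "x j < x (Suc j)" using xinc Suc.prems by simp
  show ?case
  proof (cases "i = j")
    case True then show ?thesis using step by simp
  next
    case False
    then have "x i < x j" using Suc by simp
    then show ?thesis using step by simp
  qed
qed

lemma gam_nz:
  assumes x0: "x 0 = 1" and xinc: "\<forall>j<m. x j < x (Suc j)" and j: "j \<le> m"
  shows "gam x m j \<noteq> 0"
proof -
  have "- x l / (x j - x l) \<noteq> 0" if l: "l \<in> {0..m} - {j}" for l
  proof -
    have "x l \<ge> 1" using x_ge1[OF x0 xinc] l by auto
    moreover have "x j \<noteq> x l"
    proof (cases "l < j")
      case True then show ?thesis using x_strict[OF xinc True j] by simp
    next
      case False then have "j < l" using l by auto
      then show ?thesis using x_strict[OF xinc \<open>j < l\<close>] l by force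
    qed
    ultimately show ?thesis by simp
  qed
  then show ?thesis unfolding gam_def by (simp add: prod_zero_iff)
qed

lemma Lam_facts:
  assumes x0: "x 0 = 1" and xinc: "\<forall>j<m. x j < x (Suc j)"
  shows "0 < max_gam x m" "max_gam x m \<le> Lam x m" "0 < Lam x m"
proof -
  have fin: "finite ((\<lambda>j. \<bar>gam x m j\<bar>) ` {0..m})" by simp
  have g0: "\<bar>gam x m 0\<bar> > 0" using gam_nz[OF x0 xinc, of 0] by simp
  have "\<bar>gam x m 0\<bar> \<le> max_gam x m" unfolding max_gam_def by (rule Max_ge[OF fin]) auto
  then show mg: "0 < max_gam x m" using g0 by linarith
  have "max_gam x m \<in> (\<lambda>j. \<bar>gam x m j\<bar>) ` {0..m}" unfolding max_gam_def
    by (rule Max_in[OF fin]) auto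
  then obtain j where j: "j \<le> m" "max_gam x m = \<bar>gam x m j\<bar>" by auto
  have "\<bar>gam x m j\<bar> \<le> Lam x m" unfolding Lam_def
    by (rule member_le_sum[where f="\<lambda>j. \<bar>gam x m j\<bar>"]) (use j in auto)
  then show "max_gam x m \<le> Lam x m" using j by simp
  then show "0 < Lam x m" using mg by linarith
qed

lemma sum_J:
  fixes f :: "nat \<times> nat \<times> nat \<Rightarrow> real"
  shows "(\<Sum>i\<in>Sigma {k} (\<lambda>_. Sigma {..m} (\<lambda>j. {..<sh j})). f i) = (\<Sum>j\<le>m. \<Sum>s<sh j. f (k, j, s))"
proof -
  have "(\<Sum>i\<in>Sigma {k} (\<lambda>_. Sigma {..m} (\<lambda>j. {..<sh j})). f i) =
        (\<Sum>k'\<in>{k}. \<Sum>p\<in>Sigma {..m} (\<lambda>j. {..<sh j}). f (k', p))"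
    by (subst sum.Sigma) auto
  also have "\<dots> = (\<Sum>p\<in>Sigma {..m} (\<lambda>j. {..<sh j}). f (k, p))" by simp
  also have "\<dots> = (\<Sum>j\<le>m. \<Sum>s<sh j. f (k, j, s))"
    by (subst sum.Sigma) auto
  finally show ?thesis .
qed


lemma finite_idx: "finite (idx n m x N)"
proof -
  have "idx n m x N = Sigma {..<2*n+1} (\<lambda>k. Sigma {..m} (\<lambda>j. {..<shots x m (N k) j}))"
    unfolding idx_def by auto
  then show ?thesis by simp
qed

lemma node_tail:
  assumes Dp: "\<forall>l \<theta>. prob_space (D l \<theta>) \<and> sets (D l \<theta>) = sets borel \<and> (AE y in D l \<theta>. \<bar>y\<bar> \<le> 1)"
    and x0: "x 0 = 1" and xinc: "\<forall>j<m. x j < x (Suc j)"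
    and Nk: "N k > 0" and k: "k < 2*n+1" and t: "t \<ge> 0"
  shows "measure (sample_space n m x lam D N)
           {\<omega> \<in> space (sample_space n m x lam D N).
              \<bar>est x m N \<omega> k - RM D x lam m (node n k)\<bar> \<ge> t}
         \<le> 2 * exp (- (t\<^sup>2 * real (N k)) / (2 * (Lam x m)\<^sup>2))"
proof -
  define Mi where "Mi = (\<lambda>i::nat\<times>nat\<times>nat. case i of (k, j, s) \<Rightarrow> D (x j * lam) (node n k))"
  define I where "I = idx n m x N"
  have P: "sample_space n m x lam D N = PiM I Mi" by (simp add: sample_space_def I_def Mi_def)
  define sh where "sh = (\<lambda>j. shots x m (N k) j)"
  define J where "J = Sigma {k} (\<lambda>_. Sigma {..m} (\<lambda>j. {..<sh j}))"
  define c where "c = (\<lambda>i::nat\<times>nat\<times>nat. case i of (k', j, s) \<Rightarrow> gam x m j / real (sh j))"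
  define \<Lambda> where "\<Lambda> = Lam x m"
  have Lpos: "\<Lambda> > 0" using Lam_facts[OF x0 xinc] by (simp add: \<Lambda>_def)
  have sh_ge: "real (sh j) \<ge> real (N k) * \<bar>gam x m j\<bar> / \<Lambda>" for j
    unfolding sh_def shots_def \<Lambda>_def by (rule real_nat_ceiling_ge)
  have sh_pos: "real (sh j) > 0" if j: "j \<le> m" for j
  proof -
    have "real (N k) * \<bar>gam x m j\<bar> / \<Lambda> > 0"
      using Nk gam_nz[OF x0 xinc j] Lpos by simp
    then show ?thesis using sh_ge[of j] by linarith
  qed
  have JI: "J \<subseteq> I" unfolding J_def I_def idx_def sh_def using k by auto
  have ps: "\<And>i. i \<in> I \<Longrightarrow> prob_space (Mi i)" unfolding Mi_def using Dp by (auto split: prod.splits)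
  have sb: "\<And>i. i \<in> I \<Longrightarrow> sets (Mi i) = sets borel" unfolding Mi_def using Dp by (auto split: prod.splits)
  have bd: "\<And>i. i \<in> I \<Longrightarrow> AE y in Mi i. \<bar>y\<bar> \<le> 1" unfolding Mi_def using Dp by (auto split: prod.splits)
  define S where "S = (\<Sum>i\<in>J. (2 * \<bar>c i\<bar>)\<^sup>2)"
  have S_eq: "S = (\<Sum>j\<le>m. 4 * (gam x m j)\<^sup>2 / real (sh j))"
  proof -
    have "S = (\<Sum>j\<le>m. \<Sum>s<sh j. (2 * \<bar>gam x m j / real (sh j)\<bar>)\<^sup>2)"
      unfolding S_def J_def by (subst sum_J) (simp add: c_def)
    also have "\<dots> = (\<Sum>j\<le>m. 4 * (gam x m j)\<^sup>2 / real (sh j))"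
    proof (rule sum.cong[OF refl])
      fix j assume "j \<in> {..m}"
      then have "real (sh j) > 0" using sh_pos by simp
      then show "(\<Sum>s<sh j. (2 * \<bar>gam x m j / real (sh j)\<bar>)\<^sup>2) = 4 * (gam x m j)\<^sup>2 / real (sh j)"
        by (simp add: power2_eq_square field_simps)
    qed
    finally show ?thesis .
  qed
  have S_le: "S \<le> 4 * \<Lambda>\<^sup>2 / real (N k)"
  proof -
    have "4 * (gam x m j)\<^sup>2 / real (sh j) \<le> 4 * \<Lambda> / real (N k) * \<bar>gam x m j\<bar>" if j: "j \<le> m" for j
    proof -
      have g: "\<bar>gam x m j\<bar> > 0" using gam_nz[OF x0 xinc j] by simp
      have lb: "real (N k) * \<bar>gam x m j\<bar> / \<Lambda> > 0" using g Nk Lpos by simp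
      have "4 * (gam x m j)\<^sup>2 / real (sh j) \<le> 4 * (gam x m j)\<^sup>2 / (real (N k) * \<bar>gam x m j\<bar> / \<Lambda>)"
        using sh_ge[of j] lb sh_pos[OF j] Lpos g Nk
        by (intro divide_left_mono) (auto intro!: mult_pos_pos divide_pos_pos)
      also have "\<dots> = 4 * \<Lambda> / real (N k) * \<bar>gam x m j\<bar>"
        using g Nk Lpos by (simp add: power2_eq_square field_simps)
      finally show ?thesis .
    qed
    then have "S \<le> (\<Sum>j\<le>m. 4 * \<Lambda> / real (N k) * \<bar>gam x m j\<bar>)"
      unfolding S_eq by (intro sum_mono) auto
    also have "\<dots> = 4 * \<Lambda> / real (N k) * \<Lambda>"
      by (simp only: sum_distrib_left[symmetric]) (simp add: \<Lambda>_def Lam_def)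
    finally show ?thesis by (simp add: power2_eq_square)
  qed
  have S_pos: "S > 0"
  proof -
    have "4 * (gam x m 0)\<^sup>2 / real (sh 0) > 0" using gam_nz[OF x0 xinc, of 0] sh_pos[of 0] by simp
    moreover have "4 * (gam x m 0)\<^sup>2 / real (sh 0) \<le> S"
      unfolding S_eq
      by (rule member_le_sum[where f="\<lambda>j. 4 * (gam x m j)\<^sup>2 / real (sh j)"]) (use sh_pos in auto)
    ultimately show ?thesis by linarith
  qed
  have sum_est: "(\<Sum>i\<in>J. c i * \<omega> i) = est x m N \<omega> k" for \<omega>
  proof -
    have "(\<Sum>i\<in>J. c i * \<omega> i) = (\<Sum>j\<le>m. \<Sum>s<sh j. gam x m j / real (sh j) * \<omega> (k, j, s))"
      unfolding J_def by (subst sum_J) (simp add: c_def)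
    also have "\<dots> = est x m N \<omega> k"
      unfolding est_def sh_def by (simp add: sum_distrib_left sum_divide_distrib)
    finally show ?thesis .
  qed
  have sum_mu: "(\<Sum>i\<in>J. c i * (\<integral>y. y \<partial>Mi i)) = RM D x lam m (node n k)"
  proof -
    have "(\<Sum>i\<in>J. c i * (\<integral>y. y \<partial>Mi i)) =
          (\<Sum>j\<le>m. \<Sum>s<sh j. gam x m j / real (sh j) * resp D (x j * lam) (node n k))"
      unfolding J_def by (subst sum_J) (simp add: c_def Mi_def resp_def)
    also have "\<dots> = (\<Sum>j\<le>m. gam x m j * resp D (x j * lam) (node n k))"
      by (rule sum.cong[OF refl]) (use sh_pos in auto)
    finally show ?thesis unfolding RM_def .
  qed
  have H: "measure (PiM I Mi) {\<omega> \<in> space (PiM I Mi).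
            \<bar>(\<Sum>i\<in>J. c i * \<omega> i) - (\<Sum>i\<in>J. c i * (\<integral>y. y \<partial>Mi i))\<bar> \<ge> t}
         \<le> 2 * exp (-2 * t\<^sup>2 / S)"
    unfolding S_def
    by (rule hoeffding_lin[OF _ ps sb bd JI t]) (use finite_idx I_def S_pos S_def in auto)
  have "-2 * t\<^sup>2 / S \<le> - (t\<^sup>2 * real (N k)) / (2 * \<Lambda>\<^sup>2)"
  proof -
    have "t\<^sup>2 * real (N k) / (2 * \<Lambda>\<^sup>2) = 2 * t\<^sup>2 / (4 * \<Lambda>\<^sup>2 / real (N k))"
      using Nk Lpos by (simp add: field_simps)
    also have "\<dots> \<le> 2 * t\<^sup>2 / S"
      by (rule divide_left_mono) (use S_le S_pos Nk Lpos in auto)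
    finally show ?thesis by simp
  qed
  then have "exp (-2 * t\<^sup>2 / S) \<le> exp (- (t\<^sup>2 * real (N k)) / (2 * \<Lambda>\<^sup>2))" by simp
  moreover have "measure (PiM I Mi) {\<omega> \<in> space (PiM I Mi).
            \<bar>est x m N \<omega> k - RM D x lam m (node n k)\<bar> \<ge> t} \<le> 2 * exp (-2 * t\<^sup>2 / S)"
    using H unfolding sum_mu sum_est .
  ultimately show ?thesis unfolding P \<Lambda>_def by linarith
qed


lemma comp_meas:
  fixes Mi :: "'i \<Rightarrow> real measure"
  assumes sb: "\<And>i. i \<in> I \<Longrightarrow> sets (Mi i) = sets borel"
  shows "(\<lambda>\<omega>. \<omega> i) \<in> borel_measurable (PiM I Mi)"
proof (cases "i \<in> I")
  case True
  have "(\<lambda>\<omega>. \<omega> i) \<in> measurable (PiM I Mi) (Mi i)" using True by (rule measurable_component_singleton)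
  moreover have "measurable (PiM I Mi) (Mi i) = measurable (PiM I Mi) borel"
    by (rule measurable_cong_sets) (use sb True in auto)
  ultimately show ?thesis by simp
next
  case False
  have "(\<lambda>\<omega>. undefined) \<in> borel_measurable (PiM I Mi)" by simp
  moreover have "\<And>w. w \<in> space (PiM I Mi) \<Longrightarrow> undefined = w i"
    using False by (auto simp: space_PiM PiE_def extensional_def)
  ultimately show ?thesis by (metis (no_types, lifting) measurable_cong)
qed

lemma est_meas:
  fixes Mi :: "nat \<times> nat \<times> nat \<Rightarrow> real measure"
  assumes sb: "\<And>i. i \<in> I \<Longrightarrow> sets (Mi i) = sets borel"
  shows "(\<lambda>\<omega>. est x m N \<omega> k) \<in> borel_measurable (PiM I Mi)"
  unfolding est_def
  by (intro borel_measurable_sum borel_measurable_times borel_measurable_divide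
        borel_measurable_const comp_meas[OF sb]) auto

lemma lag_cont: "continuous_on UNIV (lag n k)"
  unfolding lag_def Dk_def by (intro continuous_intros) auto

lemma rat_dense_bound:
  fixes f :: "real \<Rightarrow> real"
  assumes f: "continuous_on UNIV f" and q: "\<forall>q::rat. \<bar>f (of_rat q)\<bar> \<le> \<delta>"
  shows "\<bar>f \<theta>\<bar> \<le> \<delta>"
proof -
  have cl: "closed {x. \<bar>f x\<bar> \<le> \<delta>}"
    by (rule closed_Collect_le) (use f in \<open>auto intro: continuous_intros\<close>)
  have "\<rat> \<subseteq> {x. \<bar>f x\<bar> \<le> \<delta>}" using q by (auto simp: Rats_def)
  then have "closure \<rat> \<subseteq> {x. \<bar>f x\<bar> \<le> \<delta>}" using cl by (rule closure_minimal)
  then show ?thesis by (auto simp: Rats_closure_real)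
qed


theorem mainTheorem3:
  fixes \<eta> :: real
  assumes "0 < \<eta>" and "\<eta> < 1"
  shows "\<exists>C>0. \<forall>(n::nat) (m::nat) (x::nat \<Rightarrow> real) (lam::real)
            (D::real \<Rightarrow> real \<Rightarrow> real measure) (N::nat \<Rightarrow> nat) (\<delta>::real).
     (n \<ge> 1 \<and> lam > 0 \<and> x 0 = 1 \<and> (\<forall>j<m. x j < x (Suc j)) \<and> \<delta> > 0 \<and>
      (\<forall>l \<theta>. prob_space (D l \<theta>) \<and> sets (D l \<theta>) = sets borel \<and>
              (AE y in D l \<theta>. \<bar>y\<bar> \<le> 1)) \<and>
      trig_poly n (RM D x lam m) \<and>
      (\<forall>k<2 * n + 1. real (N k) \<ge>
          C * Lam x m ^ 3 * ln (real n + 1) ^ 3 / (max_gam x m * \<delta>\<^sup>2)))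
     \<longrightarrow> measure (sample_space n m x lam D N)
           {\<omega> \<in> space (sample_space n m x lam D N).
              \<forall>\<theta>. \<bar>RM D x lam m \<theta> - interp n (est x m N \<omega>) \<theta>\<bar> \<le> \<delta>} \<ge> 1 - \<eta>"
proof -
  define C where "C = 288 * (3 + 2 * ln (1/\<eta>))"
  have lneta: "ln (1/\<eta>) > 0" using assms by simp
  have Cpos: "C > 0" using lneta by (simp add: C_def)
  show ?thesis
  proof (intro exI[of _ C] conjI allI impI Cpos)
    fix n m :: nat and x :: "nat \<Rightarrow> real" and lam :: real and D :: "real \<Rightarrow> real \<Rightarrow> real measure"
      and N :: "nat \<Rightarrow> nat" and \<delta> :: real
    assume h: "n \<ge> 1 \<and> lam > 0 \<and> x 0 = 1 \<and> (\<forall>j<m. x j < x (Suc j)) \<and> \<delta> > 0 \<and>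
      (\<forall>l \<theta>. prob_space (D l \<theta>) \<and> sets (D l \<theta>) = sets borel \<and>
              (AE y in D l \<theta>. \<bar>y\<bar> \<le> 1)) \<and>
      trig_poly n (RM D x lam m) \<and>
      (\<forall>k<2 * n + 1. real (N k) \<ge>
          C * Lam x m ^ 3 * ln (real n + 1) ^ 3 / (max_gam x m * \<delta>\<^sup>2))"
    have n: "n \<ge> 1" and x0: "x 0 = 1" and xinc: "\<forall>j<m. x j < x (Suc j)" and dpos: "\<delta> > 0"
      and Dp: "\<forall>l \<theta>. prob_space (D l \<theta>) \<and> sets (D l \<theta>) = sets borel \<and> (AE y in D l \<theta>. \<bar>y\<bar> \<le> 1)"
      and trig: "trig_poly n (RM D x lam m)"
      and NK: "\<And>k. k < 2*n+1 \<Longrightarrow> real (N k) \<ge> C * Lam x m ^ 3 * ln (real n + 1) ^ 3 / (max_gam x m * \<delta>\<^sup>2)"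
      using h by auto
    define P where "P = sample_space n m x lam D N"
    define Mi where "Mi = (\<lambda>i::nat\<times>nat\<times>nat. case i of (k, j, s) \<Rightarrow> D (x j * lam) (node n k))"
    define I where "I = idx n m x N"
    have PI: "P = PiM I Mi" by (simp add: P_def sample_space_def I_def Mi_def)
    have ps: "\<And>i. i \<in> I \<Longrightarrow> prob_space (Mi i)" unfolding Mi_def using Dp by (auto split: prod.splits)
    have sb: "\<And>i. i \<in> I \<Longrightarrow> sets (Mi i) = sets borel" unfolding Mi_def using Dp by (auto split: prod.splits)
    interpret PS: prob_space P unfolding PI by (rule prob_space_PiM) (rule ps)
    define ll where "ll = ln (real n + 1)"
    define \<Lambda> where "\<Lambda> = Lam x m"
    define g where "g = max_gam x m"
    define t where "t = \<delta> / (12 * ll)"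
    have l2: "ln 2 \<le> ll" unfolding ll_def using n by (intro ln_mono) auto
    have lpos: "ll \<ge> 2/3" using l2 ln2_ge_two_thirds by linarith
    have gpos: "g > 0" and gL: "g \<le> \<Lambda>" and Lpos: "\<Lambda> > 0"
      using Lam_facts[OF x0 xinc] by (auto simp: g_def \<Lambda>_def)
    have tpos: "t > 0" using dpos lpos by (simp add: t_def)
    have NK2: "real (N k) \<ge> C * \<Lambda>\<^sup>2 * ll ^ 3 / \<delta>\<^sup>2" if k: "k < 2*n+1" for k
    proof -
      have "C * \<Lambda>\<^sup>2 * ll ^ 3 / \<delta>\<^sup>2 = (C * \<Lambda>\<^sup>2 * ll ^ 3 / \<delta>\<^sup>2) * 1" by simp
      also have "\<dots> \<le> (C * \<Lambda>\<^sup>2 * ll ^ 3 / \<delta>\<^sup>2) * (\<Lambda> / g)"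
        using gpos gL Cpos lpos dpos by (intro mult_left_mono) auto
      also have "\<dots> = C * \<Lambda> ^ 3 * ll ^ 3 / (g * \<delta>\<^sup>2)" using gpos dpos by (simp add: power2_eq_square power3_eq_cube field_simps)
      also have "\<dots> \<le> real (N k)" using NK[OF k] by (simp add: \<Lambda>_def ll_def g_def)
      finally show ?thesis .
    qed
    have Npos: "N k > 0" if k: "k < 2*n+1" for k
    proof -
      have "C * \<Lambda>\<^sup>2 * ll ^ 3 / \<delta>\<^sup>2 > 0" using Cpos Lpos lpos dpos by simp
      then show ?thesis using NK2[OF k] by linarith
    qed
    define Mn where "Mn = real (2*n+1)"
    have Mnpos: "Mn > 0" by (simp add: Mn_def)
    have expo: "t\<^sup>2 * real (N k) / (2 * \<Lambda>\<^sup>2) \<ge> ln (2 * Mn / \<eta>)" if k: "k < 2*n+1" for k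
    proof -
      have "t\<^sup>2 * real (N k) / (2 * \<Lambda>\<^sup>2) \<ge> t\<^sup>2 * (C * \<Lambda>\<^sup>2 * ll ^ 3 / \<delta>\<^sup>2) / (2 * \<Lambda>\<^sup>2)"
        using NK2[OF k] Lpos by (intro divide_right_mono mult_left_mono) auto
      also have "t\<^sup>2 * (C * \<Lambda>\<^sup>2 * ll ^ 3 / \<delta>\<^sup>2) / (2 * \<Lambda>\<^sup>2) = (3 + 2 * ln (1/\<eta>)) * ll"
        using Lpos dpos lpos by (simp add: t_def C_def power2_eq_square power3_eq_cube field_simps)
      finally have a: "t\<^sup>2 * real (N k) / (2 * \<Lambda>\<^sup>2) \<ge> (3 + 2 * ln (1/\<eta>)) * ll" .
      have "ln (2 * Mn / \<eta>) = ln (2 * Mn) + ln (1/\<eta>)"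
        using Mnpos assms by (simp add: ln_div ln_mult)
      also have "ln (2 * Mn) \<le> ln (4 * (real n + 1))" using Mnpos by (intro ln_mono) (auto simp: Mn_def)
      also have "ln (4 * (real n + 1)) = 2 * ln 2 + ll"
      proof -
        have "ln (4 * (real n + 1)) = ln 4 + ll" unfolding ll_def by (rule ln_mult_pos) auto
        moreover have "ln (4::real) = 2 * ln 2"
          using ln_realpow[of 2 2] by (simp add: power2_eq_square)
        ultimately show ?thesis by simp
      qed
      also have "2 * ln 2 + ll + ln (1/\<eta>) \<le> (3 + 2 * ln (1/\<eta>)) * ll"
      proof -
        have "ln (1/\<eta>) \<le> 2 * ln (1/\<eta>) * ll"
        proof -
          have "ln (1/\<eta>) * 1 \<le> ln (1/\<eta>) * (2 * ll)" using lneta lpos by (intro mult_left_mono) auto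
          then show ?thesis by (simp add: algebra_simps)
        qed
        then show ?thesis using l2 by (simp add: algebra_simps)
      qed
      finally show ?thesis using a by linarith
    qed
    define E where "E = (\<lambda>k. {\<omega> \<in> space P. \<bar>est x m N \<omega> k - RM D x lam m (node n k)\<bar> \<ge> t})"
    have Emeas: "E k \<in> sets P" for k
    proof -
      have "(\<lambda>\<omega>. est x m N \<omega> k) \<in> borel_measurable P" unfolding PI by (rule est_meas[OF sb])
      then show ?thesis unfolding E_def by measurable
    qed
    have Ebound: "measure P (E k) \<le> \<eta> / Mn" if k: "k < 2*n+1" for k
    proof -
      have "measure P (E k) \<le> 2 * exp (- (t\<^sup>2 * real (N k)) / (2 * \<Lambda>\<^sup>2))"
        unfolding E_def P_def \<Lambda>_def
        by (rule node_tail[where D=D and x=x and m=m and N=N and k=k and n=n, OF Dp x0 xinc Npos[OF k] k]) (use tpos in simp)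
      also have "\<dots> \<le> 2 * exp (- ln (2 * Mn / \<eta>))" using expo[OF k] by simp
      also have "\<dots> = \<eta> / Mn" using Mnpos assms by (simp add: exp_minus)
      finally show ?thesis .
    qed
    define B where "B = (\<Union>k<2*n+1. E k)"
    have Bmeas: "B \<in> sets P" unfolding B_def using Emeas by auto
    have Bbound: "measure P B \<le> \<eta>"
    proof -
      have "measure P B \<le> (\<Sum>k<2*n+1. measure P (E k))"
        unfolding B_def by (rule measure_UNION_le) (use Emeas in auto)
      also have "\<dots> \<le> (\<Sum>k<2*n+1. \<eta> / Mn)" by (rule sum_mono) (use Ebound in auto)
      also have "\<dots> = \<eta>" using Mnpos by (simp add: Mn_def)
      finally show ?thesis .
    qed
    define F where "F = (\<lambda>\<omega> \<theta>. \<Sum>k<2*n+1. (RM D x lam m (node n k) - est x m N \<omega> k) * lag n k \<theta>)"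
    have Fid: "RM D x lam m \<theta> - interp n (est x m N \<omega>) \<theta> = F \<omega> \<theta>" for \<omega> \<theta>
      unfolding F_def interp_eq repro_trig[OF trig, of \<theta>]
      by (simp add: sum_subtractf left_diff_distrib)
    have Fcont: "continuous_on UNIV (F \<omega>)" for \<omega>
      unfolding F_def by (intro continuous_intros continuous_on_mult_left lag_cont) 
    define T where "T = {\<omega> \<in> space P. \<forall>\<theta>. \<bar>RM D x lam m \<theta> - interp n (est x m N \<omega>) \<theta>\<bar> \<le> \<delta>}"
    have T_eq: "T = {\<omega> \<in> space P. \<forall>q::rat. \<bar>F \<omega> (of_rat q)\<bar> \<le> \<delta>}"
      unfolding T_def Fid using rat_dense_bound[OF Fcont] by blast
    have Tmeas: "T \<in> sets P"
    proof -
      have Fm: "(\<lambda>\<omega>. F \<omega> q) \<in> borel_measurable P" for q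
        unfolding F_def PI
        by (intro borel_measurable_sum borel_measurable_times borel_measurable_diff
              borel_measurable_const est_meas[OF sb])
      show ?thesis unfolding T_eq
      proof (rule sets.sets_Collect_countable_All)
        fix q :: rat
        note Fm[of "of_rat q", measurable]
        show "{\<omega> \<in> space P. \<bar>F \<omega> (of_rat q)\<bar> \<le> \<delta>} \<in> sets P" by measurable
      qed
    qed
    have sub: "space P - B \<subseteq> T"
    proof
      fix \<omega> assume w: "\<omega> \<in> space P - B"
      have small: "\<bar>RM D x lam m (node n k) - est x m N \<omega> k\<bar> \<le> t" if k: "k < 2*n+1" for k
      proof -
        have "\<not> t \<le> \<bar>est x m N \<omega> k - RM D x lam m (node n k)\<bar>"
          using w k unfolding B_def E_def by auto
        then show ?thesis by (simp add: abs_minus_commute)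
      qed
      have "\<bar>F \<omega> \<theta>\<bar> \<le> \<delta>" for \<theta>
      proof -
        have "\<bar>F \<omega> \<theta>\<bar> \<le> (\<Sum>k<2*n+1. \<bar>(RM D x lam m (node n k) - est x m N \<omega> k) * lag n k \<theta>\<bar>)"
          unfolding F_def by (rule sum_abs)
        also have "\<dots> \<le> (\<Sum>k<2*n+1. t * \<bar>lag n k \<theta>\<bar>)"
          by (rule sum_mono) (use small in \<open>auto simp: abs_mult intro: mult_right_mono\<close>)
        also have "\<dots> = t * (\<Sum>k<2*n+1. \<bar>lag n k \<theta>\<bar>)" by (simp only: sum_distrib_left)
        also have "\<dots> \<le> t * (12 * ll)"
          using lebesgue[OF n, of \<theta>] tpos by (intro mult_left_mono) (auto simp: ll_def)
        also have "\<dots> = \<delta>" using lpos by (simp add: t_def)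
        finally show ?thesis .
      qed
      then show "\<omega> \<in> T" using w unfolding T_def Fid by auto
    qed
    have "1 - \<eta> \<le> 1 - measure P B" using Bbound by simp
    also have "\<dots> = measure P (space P - B)" using PS.prob_compl[OF Bmeas] by simp
    also have "\<dots> \<le> measure P T" by (rule PS.finite_measure_mono[OF sub Tmeas])
    finally show "measure (sample_space n m x lam D N)
           {\<omega> \<in> space (sample_space n m x lam D N).
              \<forall>\<theta>. \<bar>RM D x lam m \<theta> - interp n (est x m N \<omega>) \<theta>\<bar> \<le> \<delta>} \<ge> 1 - \<eta>"
      unfolding T_def P_def .
  qed
qed

end
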